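(* Let $X$ and $Y$ be arbitrary (completely regular) spaces and $F\colon\mathcal{K}(X)\to\mathcal{K}(Y)$ satisfy: (1) if $K,L\in\mathcal{K}(X)$ and $K\subset L$, then $F(K)\subset F(L)$; (2) for each $L\in\mathcal{K}(Y)$ there is $K\in\mathcal{K}(X)$ with $L\subset F(K)$; (3) if $U\subset X$ and $V\subset Y$ are non-empty open sets such that for each compact $L\subset V$ there is a compact $K\subset U$ with $L\subset F(K)$, then for any open cover $\mathcal{W}$ of $U$ and any $y\in V$ there exist a finite $\mathcal{E}\subset\mathcal{W}$ and a neighborhood $V_y$ of $y$ such that for each compact $L\subset V_y$ there is a compact $K\subset\bigcup\mathcal{E}$ with $L\subset F(K)$. Then $F$ is monotone set tri-quotient.
   Context: $\mathcal{K}(X)$ is the set of compact subsets of $X$, $\mathcal{T}(X)$ the topology of $X$. $F$ is monotone if $K\subset L$ implies $F(K)\subset F(L)$; it is set tri-quotient if there is $s\colon\mathcal{T}(X)\to\mathcal{T}(Y)$ with: (str1) $s(U)\subset\bigcup\{F(K):K\in\mathcal{K}(X),K\subset U\}$; (str2) $s(X)=Y$; (str3) $U\subset V\Rightarrow s(U)\subset s(V)$; (str4) if $y\in s(U)$ and $\mathcal{W}$ is a cover of $\bigcup\{K\in F^{-1}(y):K\subset U\}$ by open subsets of $X$, then $y\in s(\bigcup\mathcal{E})$ for some finite $\mathcal{E}\subset\mathcal{W}$, where $F^{-1}(y)=\{K\in\mathcal{K}(X):y\in F(K)\}$. *)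

theory Defs
  imports "HOL-Analysis.Analysis"
begin

text \<open>A map F from the compact subsets of X to the compact subsets of Y is modelled
  by a function on sets together with the requirement that compact sets go to compact sets.\<close>

definition maps_compacts :: "'a topology \<Rightarrow> 'b topology \<Rightarrow> ('a set \<Rightarrow> 'b set) \<Rightarrow> bool" where
  "maps_compacts X Y F \<longleftrightarrow> (\<forall>K. compactin X K \<longrightarrow> compactin Y (F K))"

definition monotone_cmap :: "'a topology \<Rightarrow> ('a set \<Rightarrow> 'b set) \<Rightarrow> bool" where
  "monotone_cmap X F \<longleftrightarrow>
     (\<forall>K L. compactin X K \<and> compactin X L \<and> K \<subseteq> L \<longrightarrow> F K \<subseteq> F L)"

definition cinv :: "'a topology \<Rightarrow> ('a set \<Rightarrow> 'b set) \<Rightarrow> 'b \<Rightarrow> 'a set set" where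
  "cinv X F y = {K. compactin X K \<and> y \<in> F K}"

definition set_tri_quotient :: "'a topology \<Rightarrow> 'b topology \<Rightarrow> ('a set \<Rightarrow> 'b set) \<Rightarrow> bool" where
  "set_tri_quotient X Y F \<longleftrightarrow>
    (\<exists>s :: 'a set \<Rightarrow> 'b set.
       (\<forall>U. openin X U \<longrightarrow> openin Y (s U)) \<and>
       (\<forall>U. openin X U \<longrightarrow> s U \<subseteq> \<Union>{F K | K. compactin X K \<and> K \<subseteq> U}) \<and>
       s (topspace X) = topspace Y \<and>
       (\<forall>U V. openin X U \<and> openin X V \<and> U \<subseteq> V \<longrightarrow> s U \<subseteq> s V) \<and>
       (\<forall>U y \<W>. openin X U \<and> y \<in> s U \<and> (\<forall>W\<in>\<W>. openin X W) \<and>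
           \<Union>{K \<in> cinv X F y. K \<subseteq> U} \<subseteq> \<Union>\<W> \<longrightarrow>
           (\<exists>\<E>. finite \<E> \<and> \<E> \<subseteq> \<W> \<and> y \<in> s (\<Union>\<E>))))"

end

theory Submission
  imports Defs
begin

theorem lemma4p1:
  fixes X :: "'a topology" and Y :: "'b topology" and F :: "'a set \<Rightarrow> 'b set"
  assumes "completely_regular_space X" and "completely_regular_space Y"
    and "maps_compacts X Y F"
    and mono: "\<And>K L. compactin X K \<Longrightarrow> compactin X L \<Longrightarrow> K \<subseteq> L \<Longrightarrow> F K \<subseteq> F L"
    and cov: "\<And>L. compactin Y L \<Longrightarrow> \<exists>K. compactin X K \<and> L \<subseteq> F K"
    and loc: "\<And>U V \<W> y. openin X U \<Longrightarrow> U \<noteq> {} \<Longrightarrow> openin Y V \<Longrightarrow> V \<noteq> {} \<Longrightarrow>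
       (\<forall>L. compactin Y L \<and> L \<subseteq> V \<longrightarrow> (\<exists>K. compactin X K \<and> K \<subseteq> U \<and> L \<subseteq> F K)) \<Longrightarrow>
       (\<forall>W\<in>\<W>. openin X W) \<Longrightarrow> U \<subseteq> \<Union>\<W> \<Longrightarrow> y \<in> V \<Longrightarrow>
       \<exists>\<E> Vy. finite \<E> \<and> \<E> \<subseteq> \<W> \<and> openin Y Vy \<and> y \<in> Vy \<and>
         (\<forall>L. compactin Y L \<and> L \<subseteq> Vy \<longrightarrow> (\<exists>K. compactin X K \<and> K \<subseteq> \<Union>\<E> \<and> L \<subseteq> F K))"
  shows "monotone_cmap X F \<and> set_tri_quotient X Y F"
proof -
  define P where "P U V \<longleftrightarrow> openin Y V \<and> (\<forall>L. compactin Y L \<and> L \<subseteq> V \<longrightarrow> (\<exists>K. compactin X K \<and> K \<subseteq> U \<and> L \<subseteq> F K))" for U V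
  define s where "s U = \<Union>{V. P U V}" for U
  have m: "monotone_cmap X F" using mono unfolding monotone_cmap_def by blast
  have s1: "openin Y (s U)" for U unfolding s_def by (rule openin_Union) (simp add: P_def)
  have s2: "s U \<subseteq> \<Union>{F K | K. compactin X K \<and> K \<subseteq> U}" for U
  proof
    fix y assume "y \<in> s U"
    then obtain V where V: "P U V" "y \<in> V" unfolding s_def by auto
    then have yt: "y \<in> topspace Y" unfolding P_def using openin_subset by blast
    then obtain K where "compactin X K" "K \<subseteq> U" "{y} \<subseteq> F K" proof -
      have "compactin Y {y} \<and> {y} \<subseteq> V" using yt V by simp
      then show ?thesis using V that unfolding P_def by blast
    qed
    then show "y \<in> \<Union>{F K | K. compactin X K \<and> K \<subseteq> U}" by blast
  qed
  have s3: "s (topspace X) = topspace Y"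
  proof
    show "s (topspace X) \<subseteq> topspace Y" using s1 openin_subset by blast
    have "P (topspace X) (topspace Y)" unfolding P_def
      using cov compactin_subset_topspace by fastforce
    then show "topspace Y \<subseteq> s (topspace X)" unfolding s_def by (rule Union_upper[OF CollectI])
  qed
  have s4: "s U \<subseteq> s V" if "U \<subseteq> V" for U V
  proof -
    have "P V W" if "P U W" for W
    proof -
      have "\<exists>K. compactin X K \<and> K \<subseteq> V \<and> L \<subseteq> F K" if L: "compactin Y L" "L \<subseteq> W" for L
      proof -
        obtain K where "compactin X K" "K \<subseteq> U" "L \<subseteq> F K" using \<open>P U W\<close> L unfolding P_def by meson
        then show ?thesis using \<open>U \<subseteq> V\<close> by blast
      qed
      then show ?thesis using \<open>P U W\<close> unfolding P_def by blast
    qed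
    then show ?thesis unfolding s_def by blast
  qed
  have s5: "\<exists>\<E>. finite \<E> \<and> \<E> \<subseteq> \<W> \<and> y \<in> s (\<Union>\<E>)"
    if U: "openin X U" and y: "y \<in> s U" and W: "\<forall>W\<in>\<W>. openin X W"
      and c: "\<Union>{K \<in> cinv X F y. K \<subseteq> U} \<subseteq> \<Union>\<W>" for U y \<W>
  proof (cases "U = {}")
    case True
    then have "y \<in> s (\<Union>{})" using y True by simp
    then show ?thesis by (intro exI[of _ "{}"]) simp
  next
    case False
    obtain V where V: "P U V" "y \<in> V" using y unfolding s_def by auto
    then have yt: "y \<in> topspace Y" unfolding P_def using openin_subset by blast
    then obtain K0 where K0: "compactin X K0" "K0 \<subseteq> U" "y \<in> F K0" proof -
      have "compactin Y {y} \<and> {y} \<subseteq> V" using yt V by simp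
      then show ?thesis using V that unfolding P_def by blast
    qed
    have "U \<subseteq> \<Union>\<W>"
    proof
      fix x assume x: "x \<in> U"
      then have xt: "x \<in> topspace X" using U openin_subset by blast
      have ck: "compactin X (K0 \<union> {x})" using compactin_Un[OF K0(1), of "{x}"] xt by simp
      moreover have "F K0 \<subseteq> F (K0 \<union> {x})" using mono[OF K0(1) ck] by blast
      ultimately have "K0 \<union> {x} \<in> {K \<in> cinv X F y. K \<subseteq> U}"
        using K0 x unfolding cinv_def by auto
      then show "x \<in> \<Union>\<W>" using c by blast
    qed
    then obtain \<E> Vy where E: "finite \<E>" "\<E> \<subseteq> \<W>" "openin Y Vy" "y \<in> Vy"
      "\<forall>L. compactin Y L \<and> L \<subseteq> Vy \<longrightarrow> (\<exists>K. compactin X K \<and> K \<subseteq> \<Union>\<E> \<and> L \<subseteq> F K)"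
    proof -
      have "openin Y V" "V \<noteq> {}" "\<forall>L. compactin Y L \<and> L \<subseteq> V \<longrightarrow> (\<exists>K. compactin X K \<and> K \<subseteq> U \<and> L \<subseteq> F K)"
        using V unfolding P_def by auto
      from loc[OF U False this W \<open>U \<subseteq> \<Union>\<W>\<close> V(2)] show ?thesis using that by blast
    qed
    have "P (\<Union>\<E>) Vy" unfolding P_def using E by blast
    then have "y \<in> s (\<Union>\<E>)" unfolding s_def using E by blast
    then show ?thesis using E by blast
  qed
  have "set_tri_quotient X Y F" unfolding set_tri_quotient_def
  proof (rule exI[of _ s], intro conjI allI impI)
    show "s (topspace X) = topspace Y" by (rule s3)
  next
    fix U assume "openin X U" then show "openin Y (s U)" using s1 by simp
  next
    fix U assume "openin X U" then show "s U \<subseteq> \<Union>{F K | K. compactin X K \<and> K \<subseteq> U}" using s2 by simp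
  next
    fix U V assume "openin X U \<and> openin X V \<and> U \<subseteq> V" then show "s U \<subseteq> s V" using s4 by simp
  next
    fix U y \<W> assume "openin X U \<and> y \<in> s U \<and> (\<forall>W\<in>\<W>. openin X W) \<and>
           \<Union>{K \<in> cinv X F y. K \<subseteq> U} \<subseteq> \<Union>\<W>"
    then show "\<exists>\<E>. finite \<E> \<and> \<E> \<subseteq> \<W> \<and> y \<in> s (\<Union>\<E>)" using s5 by blast
  qed
  then show ?thesis using m by blast
qed

end
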